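(* Let $n\ge1$ and let $q:\Delta_n\to C_n(S^1)$ be $q(w_1,\dots,w_n)=\{w_1\bmod 1,\dots,w_n\bmod 1\}$. If $\sigma,\sigma'$ are two faces of $\Delta_n$ with the same number of vertices which are both extremal, then $q(\sigma)=q(\sigma')$; and if they are both non-extremal, then $q(\sigma)=q(\sigma')$.
   Context: $S^1=[0,1]/(0\sim1)=\mathbb{R}/\mathbb{Z}$. $C_n(S^1)$ is the set of nonempty subsets of $S^1$ with at most $n$ elements, topologized as a quotient of $(S^1)^n$ via $(x_1,\dots,x_n)\mapsto\{x_1,\dots,x_n\}$. $\Delta_n\subset\mathbb{R}^n$ is the $n$-simplex with vertices $b_0=0$ and $b_k=e_1+\dots+e_k$ for $1\le k\le n$ ($e_i$ the standard basis vectors). A face of $\Delta_n$ is extremal if its vertex set contains both $b_0$ and $b_n$, and non-extremal otherwise. *)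

theory Defs
  imports Complex_Main
begin

text \<open>Points of R^n are modelled as functions nat => real, coordinates indexed 1..n.
  The circle S^1 = R/Z is represented by the fundamental domain [0,1) via frac,
  so a point of C_n(S^1) is a nonempty subset of [0,1) with at most n elements.\<close>

definition simplex_vertex :: "nat \<Rightarrow> (nat \<Rightarrow> real)" where
  "simplex_vertex k = (\<lambda>i. if 1 \<le> i \<and> i \<le> k then 1 else 0)"

definition is_face :: "nat \<Rightarrow> nat set \<Rightarrow> bool" where
  "is_face n V \<longleftrightarrow> V \<subseteq> {0..n} \<and> V \<noteq> {}"

definition face_points :: "nat set \<Rightarrow> (nat \<Rightarrow> real) set" where
  "face_points V = {w. \<exists>t::nat \<Rightarrow> real. (\<forall>k\<in>V. 0 \<le> t k) \<and> (\<Sum>k\<in>V. t k) = 1 \<and>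
                        w = (\<lambda>i. \<Sum>k\<in>V. t k * simplex_vertex k i)}"

definition extremal :: "nat \<Rightarrow> nat set \<Rightarrow> bool" where
  "extremal n V \<longleftrightarrow> 0 \<in> V \<and> n \<in> V"

definition qmap :: "nat \<Rightarrow> (nat \<Rightarrow> real) \<Rightarrow> real set" where
  "qmap n w = (\<lambda>i. frac (w i)) ` {1..n}"

end

theory Submission imports Defs begin

definition tail :: "(nat\<Rightarrow>real) \<Rightarrow> nat set \<Rightarrow> nat \<Rightarrow> real" where
  "tail t V k = (\<Sum>k'\<in>{k'\<in>V. k \<le> k'}. t k')"

lemma w_eq: "finite V \<Longrightarrow> 1 \<le> i \<Longrightarrow> (\<Sum>k\<in>V. t k * simplex_vertex k i) = tail t V i"
  unfolding tail_def simplex_vertex_def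
  by (simp add: sum.inter_filter if_distrib cong: if_cong)

lemma core:
  assumes "V \<subseteq> {0..n}" and n1: "1 \<le> n"
  shows "(\<lambda>i. \<Sum>k\<in>V. t k * simplex_vertex k i) ` {1..n}
         = tail t V ` (V - {0}) \<union> (if n \<in> V then {} else {0})"
proof -
  have fin: "finite V" using assms finite_subset by blast
  have W: "(\<lambda>i. \<Sum>k\<in>V. t k * simplex_vertex k i) ` {1..n} = tail t V ` {1..n}"
    using w_eq[OF fin] by (intro image_cong) auto
  show ?thesis unfolding W
  proof (intro equalityI subsetI)
    fix y assume "y \<in> tail t V ` {1..n}"
    then obtain i where i: "i \<in> {1..n}" "y = tail t V i" by auto
    show "y \<in> tail t V ` (V - {0}) \<union> (if n \<in> V then {} else {0})"
    proof (cases "\<exists>k\<in>V. i \<le> k")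
      case True
      define m where "m = Min {k\<in>V. i \<le> k}"
      have fm: "finite {k\<in>V. i \<le> k}" using fin by auto
      have mV: "m \<in> {k\<in>V. i \<le> k}" unfolding m_def using True fm by (intro Min_in) auto
      have "{k'\<in>V. i \<le> k'} = {k'\<in>V. m \<le> k'}"
        using mV Min_le[OF fm] unfolding m_def by fastforce
      hence "tail t V i = tail t V m" unfolding tail_def by simp
      moreover have "m \<in> V - {0}" using mV i by auto
      ultimately show ?thesis using i by auto
    next
      case False
      hence "{k'\<in>V. i \<le> k'} = {}" by auto
      hence "y = 0" using i unfolding tail_def by (metis sum.empty)
      moreover have "n \<notin> V" using False i by auto
      ultimately show ?thesis by simp
    qed
  next
    fix y assume y: "y \<in> tail t V ` (V - {0}) \<union> (if n \<in> V then {} else {0})"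
    show "y \<in> tail t V ` {1..n}"
    proof (cases "y \<in> tail t V ` (V - {0})")
      case True
      then obtain k where k: "k \<in> V - {0}" "y = tail t V k" by blast
      then have "k \<in> {1..n}" using assms by auto
      then show ?thesis using k(2) by blast
    next
      case False
      hence "n \<notin> V" "y = 0" using y by (auto split: if_splits)
      hence "{k'\<in>V. n \<le> k'} = {}" using assms by force
      hence "tail t V n = 0" unfolding tail_def by (metis sum.empty)
      moreover have "n \<in> {1..n}" using n1 by auto
      ultimately show ?thesis using \<open>y = 0\<close> by force
    qed
  qed
qed

lemma tail_exists:
  fixes g :: "nat \<Rightarrow> real"
  assumes "finite V" "\<forall>a\<in>V. \<forall>b\<in>V. a \<le> b \<longrightarrow> g b \<le> g a" "\<forall>a\<in>V. 0 \<le> g a"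
  shows "\<exists>t. (\<forall>k\<in>V. 0 \<le> t k) \<and> (\<forall>k\<in>V. tail t V k = g k)"
  using assms
proof (induction V arbitrary: g rule: finite_linorder_max_induct)
  case empty then show ?case by simp
next
  case (insert b A)
  define g' where "g' = (\<lambda>k. g k - g b)"
  have "\<exists>t. (\<forall>k\<in>A. 0 \<le> t k) \<and> (\<forall>k\<in>A. tail t A k = g' k)"
  proof (intro insert.IH ballI impI)
    fix a c assume "a \<in> A" "c \<in> A" "a \<le> c"
    then show "g' c \<le> g' a" using insert.prems(1) unfolding g'_def by auto
  next
    fix a assume "a \<in> A"
    then have "a \<le> b" using insert.hyps by auto
    then have "g b \<le> g a" using insert.prems(1) \<open>a \<in> A\<close> by blast
    then show "0 \<le> g' a" unfolding g'_def by simp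
  qed
  then obtain t where t: "\<forall>k\<in>A. 0 \<le> t k" "\<forall>k\<in>A. tail t A k = g' k" by blast
  define t' where "t' = t(b := g b)"
  have bA: "b \<notin> A" using insert.hyps by auto
  have "\<forall>k\<in>insert b A. tail t' (insert b A) k = g k"
  proof
    fix k assume k: "k \<in> insert b A"
    show "tail t' (insert b A) k = g k"
    proof (cases "k = b")
      case True
      hence "{k'\<in>insert b A. k \<le> k'} = {b}" using insert.hyps by fastforce
      then show ?thesis unfolding tail_def t'_def using True by simp
    next
      case False
      hence kA: "k \<in> A" using k by auto
      hence "{k'\<in>insert b A. k \<le> k'} = insert b {k'\<in>A. k \<le> k'}" using insert.hyps by fastforce
      hence "tail t' (insert b A) k = g b + (\<Sum>k'\<in>{k'\<in>A. k \<le> k'}. t' k')"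
        unfolding tail_def t'_def using bA insert.hyps by simp
      also have "(\<Sum>k'\<in>{k'\<in>A. k \<le> k'}. t' k') = tail t A k"
        unfolding tail_def t'_def using bA by (intro sum.cong) auto
      finally show ?thesis using t kA unfolding g'_def by simp
    qed
  qed
  moreover have "\<forall>k\<in>insert b A. 0 \<le> t' k" using t insert.prems unfolding t'_def by auto
  ultimately show ?case by blast
qed

lemma surj_anti:
  fixes T :: "real set" and A :: "nat set"
  assumes "finite A" "A \<noteq> {}" "finite T" "T \<noteq> {}" "card T \<le> card A"
  shows "\<exists>g. (\<forall>a\<in>A. \<forall>b\<in>A. a \<le> b \<longrightarrow> g b \<le> g a) \<and> g ` A = T"
  using assms
proof (induction A arbitrary: T rule: finite_linorder_max_induct)
  case empty then show ?case by simp
next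
  case (insert b A)
  show ?case
  proof (cases "A = {}")
    case True
    then have "card T \<le> 1" using insert.prems by simp
    moreover have "card T \<noteq> 0" using insert.prems by simp
    ultimately have "card T = 1" by linarith
    then obtain x where "T = {x}" by (rule card_1_singletonE)
    then show ?thesis using True by (intro exI[of _ "\<lambda>_. x"]) auto
  next
    case Ane: False
    have cA: "card (insert b A) = card A + 1" using insert.hyps by auto
    have MT: "Min T \<in> T" "\<forall>x\<in>T. Min T \<le> x" using insert.prems by auto
    obtain T' where T': "finite T'" "T' \<noteq> {}" "card T' \<le> card A" "T = insert (Min T) T'"
    proof (cases "card T \<le> card A")
      case True
      have "T = insert (Min T) T" using MT(1) by (simp add: insert_absorb)
      then show ?thesis using that[of T] insert.prems True by blast
    next
      case False
      hence c: "card T = card A + 1" using cA insert.prems by simp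
      have "card (T - {Min T}) = card A" using c MT insert.prems by simp
      moreover have "card A \<noteq> 0" using Ane insert.hyps by simp
      moreover have "T = insert (Min T) (T - {Min T})" using MT(1) by (simp add: insert_absorb)
      moreover have "finite (T - {Min T})" using insert.prems by simp
      ultimately have "T - {Min T} \<noteq> {}" "card (T - {Min T}) \<le> card A"
        "finite (T - {Min T})" "T = insert (Min T) (T - {Min T})"
        by (metis card.empty, linarith, blast+)
      then show ?thesis using that[of "T - {Min T}"] by blast
    qed
    obtain g where g: "\<forall>a\<in>A. \<forall>c\<in>A. a \<le> c \<longrightarrow> g c \<le> g a" "g ` A = T'"
      using insert.IH[OF Ane T'(1,2,3)] by blast
    define g' where "g' = g(b := Min T)"
    have bA: "b \<notin> A" using insert.hyps by auto
    have "g' ` A = g ` A" unfolding g'_def using bA by (intro image_cong) auto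
    moreover have "g' b = Min T" unfolding g'_def by simp
    ultimately have "g' ` insert b A = T" using g(2) T'(4) by (simp only: image_insert)
    moreover have "\<forall>a\<in>insert b A. \<forall>c\<in>insert b A. a \<le> c \<longrightarrow> g' c \<le> g' a"
    proof (intro ballI impI)
      fix a c assume a: "a \<in> insert b A" and c: "c \<in> insert b A" and ac: "a \<le> c"
      show "g' c \<le> g' a"
      proof (cases "c = b")
        case True
        have "g' a \<in> T" using a \<open>g' ` insert b A = T\<close> by blast
        then show ?thesis using True MT unfolding g'_def by auto
      next
        case False
        hence "c \<in> A" using c by auto
        hence "a < b" using ac insert.hyps by (meson le_less_trans)
        hence "a \<in> A" using a by auto
        then show ?thesis using g \<open>c \<in> A\<close> ac bA unfolding g'_def
          by (metis fun_upd_other)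
      qed
    qed
    ultimately show ?thesis by blast
  qed
qed


lemma tail_Min:
  assumes "finite V" "V \<noteq> {}"
  shows "tail t V (Min V) = sum t V"
proof -
  have "{k\<in>V. Min V \<le> k} = V" using assms by auto
  then show ?thesis unfolding tail_def by simp
qed

lemma qmap_eq: "qmap n w = frac ` (w ` {1..n})"
  unfolding qmap_def by (simp add: image_image)

lemma realize:
  assumes "is_face n V" "1 \<le> n" "\<forall>a\<in>V. \<forall>b\<in>V. a \<le> b \<longrightarrow> g b \<le> g a"
    "\<forall>a\<in>V. 0 \<le> g a" "g (Min V) = 1"
  shows "\<exists>w\<in>face_points V. qmap n w = frac ` (g ` (V - {0}) \<union> (if n \<in> V then {} else {0}))"
proof -
  have Vs: "V \<subseteq> {0..n}" "V \<noteq> {}" using assms(1) unfolding is_face_def by auto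
  have fin: "finite V" using Vs finite_subset by blast
  obtain t where t: "\<forall>k\<in>V. 0 \<le> t k" "\<forall>k\<in>V. tail t V k = g k"
    using tail_exists[OF fin assms(3,4)] by blast
  have "sum t V = 1" using tail_Min[OF fin Vs(2), of t] t(2) Min_in[OF fin Vs(2)] assms(5) by simp
  define w where "w = (\<lambda>i. \<Sum>k\<in>V. t k * simplex_vertex k i)"
  have "w \<in> face_points V" unfolding face_points_def w_def using t(1) \<open>sum t V = 1\<close> by blast
  moreover have "qmap n w = frac ` (g ` (V - {0}) \<union> (if n \<in> V then {} else {0}))"
  proof -
    have "tail t V ` (V - {0}) = g ` (V - {0})" using t(2) by (intro image_cong) auto
    then show ?thesis unfolding qmap_eq w_def core[OF Vs(1) assms(2)] by simp
  qed
  ultimately show ?thesis by blast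
qed

lemma point_img:
  assumes "is_face n V" "1 \<le> n" "w \<in> face_points V"
  obtains t where "tail t V (Min V) = 1"
    "qmap n w = frac ` (tail t V ` (V - {0}) \<union> (if n \<in> V then {} else {0}))"
proof -
  have Vs: "V \<subseteq> {0..n}" "V \<noteq> {}" using assms(1) unfolding is_face_def by auto
  have fin: "finite V" using Vs finite_subset by blast
  obtain t where t: "sum t V = 1" "w = (\<lambda>i. \<Sum>k\<in>V. t k * simplex_vertex k i)"
    using assms(3) unfolding face_points_def by blast
  show ?thesis
    using that[of t] t tail_Min[OF fin Vs(2), of t] core[OF Vs(1) assms(2), of t]
    unfolding qmap_eq by simp
qed

lemma frac_id: "x \<in> {0..<1} \<Longrightarrow> frac x = x"
  by (simp add: frac_eq)

lemma frac_img: "T \<subseteq> {0..<1} \<Longrightarrow> frac ` T = T"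
  using frac_id by (force simp: image_iff)

lemma frac_in: "frac (x::real) \<in> {0..<1}"
  by (simp add: frac_lt_1)

lemma ext_img:
  assumes "is_face n V" "1 \<le> n" "extremal n V"
  shows "qmap n ` face_points V = {T. T \<subseteq> {0..<1} \<and> T \<noteq> {} \<and> finite T \<and> card T \<le> card V - 1}"
proof -
  have Vs: "V \<subseteq> {0..n}" "V \<noteq> {}" using assms(1) unfolding is_face_def by auto
  have fin: "finite V" using Vs finite_subset by blast
  have n0: "n \<in> V" "0 \<in> V" using assms(3) unfolding extremal_def by auto
  have cA: "card (V - {0}) = card V - 1" using n0 fin by simp
  have nA: "n \<in> V - {0}" using n0 assms(2) by auto
  show ?thesis
  proof (intro equalityI subsetI)
    fix T :: "real set" assume "T \<in> qmap n ` face_points V"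
    then obtain w where w: "w \<in> face_points V" "T = qmap n w" by blast
    obtain t where "qmap n w = frac ` (tail t V ` (V - {0}) \<union> (if n \<in> V then {} else {0}))"
      using point_img[OF assms(1,2) w(1)] by blast
    hence T: "T = frac ` tail t V ` (V - {0})" using w(2) n0 by simp
    have f1: "finite (V - {0})" using fin by simp
    have "card T \<le> card (tail t V ` (V - {0}))" unfolding T
      by (rule card_image_le) (use f1 in simp)
    also have "\<dots> \<le> card (V - {0})" by (rule card_image_le[OF f1])
    finally have "card T \<le> card V - 1" using cA by simp
    moreover have "T \<noteq> {}" "finite T" using T nA fin by auto
    moreover have "T \<subseteq> {0..<1}" using T frac_in by auto
    ultimately show "T \<in> {T. T \<subseteq> {0..<1} \<and> T \<noteq> {} \<and> finite T \<and> card T \<le> card V - 1}" by blast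
  next
    fix T :: "real set" assume "T \<in> {T. T \<subseteq> {0..<1} \<and> T \<noteq> {} \<and> finite T \<and> card T \<le> card V - 1}"
    hence T: "T \<subseteq> {0..<1}" "T \<noteq> {}" "finite T" "card T \<le> card (V - {0})" using cA by auto
    obtain g where g: "\<forall>a\<in>V - {0}. \<forall>b\<in>V - {0}. a \<le> b \<longrightarrow> g b \<le> g a" "g ` (V - {0}) = T"
      using surj_anti[of "V - {0}" T] T nA fin by blast
    define g' where "g' = g(0 := 1)"
    have "g' ` (V - {0}) = g ` (V - {0})" unfolding g'_def by (intro image_cong) auto
    hence g'A: "g' ` (V - {0}) = T" using g(2) by simp
    have anti: "\<forall>a\<in>V. \<forall>b\<in>V. a \<le> b \<longrightarrow> g' b \<le> g' a"
    proof (intro ballI impI)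
      fix a b assume ab: "a \<in> V" "b \<in> V" "a \<le> b"
      show "g' b \<le> g' a"
      proof (cases "b = 0")
        case True then show ?thesis using ab by simp
      next
        case False
        have "g' b \<in> T" using g'A ab False by blast
        hence "g' b \<le> 1" using T(1) by auto
        then show ?thesis using g(1) ab False unfolding g'_def by auto
      qed
    qed
    have nonneg: "\<forall>a\<in>V. 0 \<le> g' a"
    proof
      fix a assume "a \<in> V"
      show "0 \<le> g' a"
      proof (cases "a = 0")
        case False
        then have "g' a \<in> T" using g'A \<open>a \<in> V\<close> by blast
        then show ?thesis using T(1) by auto
      qed (simp add: g'_def)
    qed
    have "Min V = 0" using n0 fin by (simp add: Min_eqI)
    hence gmin: "g' (Min V) = 1" unfolding g'_def by simp
    obtain w where "w \<in> face_points V"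
      "qmap n w = frac ` (g' ` (V - {0}) \<union> (if n \<in> V then {} else {0}))"
      using realize[OF assms(1,2) anti nonneg gmin] by blast
    then have "qmap n w = T" using g'A n0 frac_img[OF T(1)] by simp
    then show "T \<in> qmap n ` face_points V" using \<open>w \<in> face_points V\<close> by blast
  qed
qed

lemma nonext_img:
  assumes "is_face n V" "1 \<le> n" "\<not> extremal n V"
  shows "qmap n ` face_points V = {T. T \<subseteq> {0..<1} \<and> 0 \<in> T \<and> finite T \<and> card T \<le> card V}"
proof -
  have Vs: "V \<subseteq> {0..n}" "V \<noteq> {}" using assms(1) unfolding is_face_def by auto
  have fin: "finite V" using Vs finite_subset by blast
  have MV: "Min V \<in> V" using fin Vs by simp
  have ne: "0 \<notin> V \<or> n \<notin> V" using assms(3) unfolding extremal_def by auto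
  show ?thesis
  proof (intro equalityI subsetI)
    fix T :: "real set" assume "T \<in> qmap n ` face_points V"
    then obtain w where w: "w \<in> face_points V" "T = qmap n w" by blast
    obtain t where t: "tail t V (Min V) = 1"
      "qmap n w = frac ` (tail t V ` (V - {0}) \<union> (if n \<in> V then {} else {0}))"
      using point_img[OF assms(1,2) w(1)] by blast
    have f0: "frac (tail t V (Min V)) = 0" using t(1) by simp
    have sub: "T \<subseteq> frac ` tail t V ` V"
    proof
      fix y assume "y \<in> T"
      then have "y \<in> frac ` tail t V ` (V - {0}) \<or> y = 0" using w(2) t(2)
        by (auto split: if_splits)
      then show "y \<in> frac ` tail t V ` V"
      proof
        assume "y = 0" then show ?thesis using f0 MV by force
      qed blast
    qed
    have "0 \<in> T"
    proof (cases "n \<in> V")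
      case False then show ?thesis using w(2) t(2) by simp
    next
      case True
      then have "0 \<notin> V" using ne by blast
      then have "Min V \<in> V - {0}" using MV by auto
      then show ?thesis using w(2) t(2) f0 by force
    qed
    moreover have "card T \<le> card V"
    proof -
      have "card T \<le> card (frac ` tail t V ` V)" by (rule card_mono) (use sub fin in auto)
      also have "\<dots> \<le> card (tail t V ` V)" by (rule card_image_le) (use fin in simp)
      also have "\<dots> \<le> card V" by (rule card_image_le[OF fin])
      finally show ?thesis .
    qed
    moreover have "finite T" using sub fin finite_subset by blast
    moreover have "T \<subseteq> {0..<1}" using w(2) t(2) frac_in by auto
    ultimately show "T \<in> {T. T \<subseteq> {0..<1} \<and> 0 \<in> T \<and> finite T \<and> card T \<le> card V}" by blast
  next
    fix T :: "real set" assume "T \<in> {T. T \<subseteq> {0..<1} \<and> 0 \<in> T \<and> finite T \<and> card T \<le> card V}"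
    hence T: "T \<subseteq> {0..<1}" "0 \<in> T" "finite T" "card T \<le> card V" by auto
    have cT: "card (T - {0}) = card T - 1" using T by simp
    have cT1: "card T \<ge> 1" using T by (metis card_0_eq empty_iff less_one not_le)
    show "T \<in> qmap n ` face_points V"
    proof (cases "0 \<in> V")
      case False
      define U where "U = insert 1 (T - {0})"
      have U: "finite U" "U \<noteq> {}" "U \<subseteq> {0..1}" using T unfolding U_def by auto
      have "card U \<le> Suc (card (T - {0}))" unfolding U_def using T(3) by (simp add: card_insert_if)
      hence cU: "card U \<le> card V" using cT cT1 T(4) by linarith
      obtain g where g: "\<forall>a\<in>V. \<forall>b\<in>V. a \<le> b \<longrightarrow> g b \<le> g a" "g ` V = U"
        using surj_anti[of V U] U cU fin Vs by blast
      have nonneg: "\<forall>a\<in>V. 0 \<le> g a" using g(2) U(3) by auto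
      have "1 \<in> g ` V" using g(2) unfolding U_def by simp
      then obtain k where k: "k \<in> V" "g k = 1" by auto
      have "Min V \<le> k" using k(1) fin by simp
      hence "g k \<le> g (Min V)" using g(1) k(1) MV by blast
      moreover have "g (Min V) \<le> 1" using MV g(2) U(3) by auto
      ultimately have gmin: "g (Min V) = 1" using k by simp
      obtain w where w: "w \<in> face_points V"
        "qmap n w = frac ` (g ` (V - {0}) \<union> (if n \<in> V then {} else {0}))"
        using realize[OF assms(1,2) g(1) nonneg gmin] by blast
      have "V - {0} = V" using False by simp
      have fU: "frac ` U = T"
      proof -
        have "frac ` U = insert (frac 1) (frac ` (T - {0}))" unfolding U_def by simp
        also have "frac ` (T - {0}) = T - {0}" by (rule frac_img) (use T in auto)
        finally show ?thesis using T(2) by auto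
      qed
      have "qmap n w = T" using w(2) \<open>V - {0} = V\<close> g(2) fU T(2) by auto
      then show ?thesis using w(1) by blast
    next
      case True
      then have nV: "n \<notin> V" using ne by blast
      define A where "A = V - {0}"
      have cA: "card A = card V - 1" unfolding A_def using True fin by simp
      define T0 where "T0 = (if T - {0} = {} then {0} else T - {0})"
      have T0: "finite T0" "T0 \<noteq> {}" "T0 \<subseteq> {0..<1}" "T0 \<union> {0} = T"
        using T unfolding T0_def by auto
      obtain g where g: "\<forall>a\<in>A. \<forall>b\<in>A. a \<le> b \<longrightarrow> g b \<le> g a"
        "g ` A = (if A = {} then {} else T0)"
      proof (cases "A = {}")
        case True then show ?thesis using that[of id] by simp
      next
        case False
        have "card T0 \<le> card A"
        proof (cases "T - {0} = {}")
          case True then show ?thesis unfolding T0_def using False fin A_def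
            by (simp add: Suc_leI card_gt_0_iff)
        next
          case False then show ?thesis unfolding T0_def using cT cA T(4) by simp
        qed
        moreover have "finite A" using fin unfolding A_def by simp
        ultimately obtain g where "\<forall>a\<in>A. \<forall>b\<in>A. a \<le> b \<longrightarrow> g b \<le> g a" "g ` A = T0"
          using surj_anti[of A T0] T0(1,2) False by blast
        then show ?thesis using that[of g] False by simp
      qed
      have gA: "g ` A \<subseteq> {0..<1}" using g(2) T0(3) by (auto split: if_splits)
      define g' where "g' = g(0 := 1)"
      have "g' ` A = g ` A" unfolding g'_def A_def by (intro image_cong) auto
      hence g'A: "g' ` A \<subseteq> {0..<1}" using gA by simp
      have anti: "\<forall>a\<in>V. \<forall>b\<in>V. a \<le> b \<longrightarrow> g' b \<le> g' a"
      proof (intro ballI impI)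
        fix a b assume ab: "a \<in> V" "b \<in> V" "a \<le> b"
        show "g' b \<le> g' a"
        proof (cases "b = 0")
          case True then show ?thesis using ab by simp
        next
          case False
          have "g' b \<in> g' ` A" using ab False unfolding A_def by blast
          hence "g' b \<le> 1" using g'A by auto
          then show ?thesis using g(1) ab False unfolding g'_def A_def by auto
        qed
      qed
      have nonneg: "\<forall>a\<in>V. 0 \<le> g' a"
      proof
        fix a assume "a \<in> V"
        show "0 \<le> g' a"
        proof (cases "a = 0")
          case False
          then have "g' a \<in> g' ` A" using \<open>a \<in> V\<close> unfolding A_def by blast
          then show ?thesis using g'A by auto
        qed (simp add: g'_def)
      qed
      have "Min V = 0" using True fin by (simp add: Min_eqI)
      hence gmin: "g' (Min V) = 1" unfolding g'_def by simp
      obtain w where w: "w \<in> face_points V"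
        "qmap n w = frac ` (g' ` (V - {0}) \<union> (if n \<in> V then {} else {0}))"
        using realize[OF assms(1,2) anti nonneg gmin] by blast
      have q: "qmap n w = g ` A \<union> {0}"
      proof -
        have "qmap n w = frac ` (g ` A \<union> {0})" using w(2) nV \<open>g' ` A = g ` A\<close>
          unfolding A_def by simp
        also have "\<dots> = g ` A \<union> {0}" by (rule frac_img) (use gA in auto)
        finally show ?thesis .
      qed
      have "g ` A \<union> {0} = T"
      proof (cases "A = {}")
        case False then show ?thesis using g(2) T0(4) by simp
      next
        case Ae: True
        then have "V = {0}" using True unfolding A_def by auto
        then have "card V = 1" by simp
        then have "card T \<le> 1" using T(4) by simp
        then have "\<forall>x\<in>T. \<forall>y\<in>T. x = y" using T(3) card_le_Suc0_iff_eq[of T] by simp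
        then have "T = {0}" using T(2) by blast
        then show ?thesis using g(2) Ae by simp
      qed
      then show ?thesis using q w(1) by blast
    qed
  qed
qed

theorem lemma10p1:
  fixes n :: nat and V V' :: "nat set"
  assumes "n \<ge> 1"
    and "is_face n V" and "is_face n V'"
    and "card V = card V'"
  shows "(extremal n V \<and> extremal n V' \<longrightarrow>
            qmap n ` face_points V = qmap n ` face_points V')
       \<and> (\<not> extremal n V \<and> \<not> extremal n V' \<longrightarrow>
            qmap n ` face_points V = qmap n ` face_points V')"
  using ext_img[OF assms(2,1)] ext_img[OF assms(3,1)]
    nonext_img[OF assms(2,1)] nonext_img[OF assms(3,1)] assms(4) by simp

end
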